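(* Let $f:\mathbb{R}^\ell\times\mathbb{R}^m\to\mathbb{R}^\ell$ be $C^1$, let $\Lambda$ be a parameter shift with limits $\lambda_\pm$, and suppose $X$ defines a forward inflowing stable path with endpoints $X_\pm$. Then for every $r>0$, the unique solution $\{x_n^r\}_{n\in\mathbb{Z}}$ of $x_{n+1}=f(x_n,\Lambda(rn))$ with $\lim_{n\to-\infty}x_n^r=X_-$ satisfies $\lim_{n\to\infty}x_n^r=X_+$ (i.e. there is no R-tipping away from $X_-$).
   Context: A parameter shift is a $C^1$ function $\Lambda:\mathbb{R}\to\mathbb{R}^m$ with $\lim_{s\to\pm\infty}\Lambda(s)=\lambda_\pm$ and $\lim_{s\to\pm\infty}\Lambda'(s)=0$. A stable path is given by $X:\mathbb{R}\to\mathbb{R}^\ell$ such that: $X(s)$ is a fixed point of $f(\cdot,\Lambda(s))$ for every $s$; $\{(s,X(s))\}$ is a connected curve; the limits $X_\pm=\lim_{s\to\pm\infty}X(s)$ exist and are fixed points of $f(\cdot,\lambda_\pm)$; and the spectral radius of $D_xf(X(s),\Lambda(s))$ is $<1$ for all $s\in\mathbb{R}\cup\{\pm\infty\}$ (with $X(\pm\infty)=X_\pm$, $\Lambda(\pm\infty)=\lambda_\pm$). It is known that for each $r>0$ there is a unique solution with $x_n^r\to X_-$ as $n\to-\infty$. $\mathbb{B}(p,\lambda)$ denotes the basin of attraction of a fixed point $p$ of $f(\cdot,\lambda)$. The stable path is forward inflowing stable if there exist compact sets $K(s)\subset\mathbb{R}^\ell$, $s\in\mathbb{R}$, such that: (1)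 $K(s_1)\subset K(s_2)$ whenever $s_1<s_2$; (2) $f(K(s),\Lambda(s))\subset K(s)$ for all $s$; (3) $X_\pm\in\operatorname{Int}K_\pm$, where $K_-=\bigcap_{s}K(s)$ and $K_+=\overline{\bigcup_sK(s)}$; (4) $K_+$ is compact and $K_+\subset\mathbb{B}(X_+,\lambda_+)$. *)

theory Defs
  imports "HOL-Analysis.Analysis"
begin

definition C1_map :: "('a::real_normed_vector \<Rightarrow> 'b::real_normed_vector) \<Rightarrow> bool" where
  "C1_map g \<longleftrightarrow> (\<exists>g'. (\<forall>p. (g has_derivative blinfun_apply (g' p)) (at p)) \<and> continuous_on UNIV g')"

definition mat_spectral_radius :: "real^'n^'n \<Rightarrow> real" where
  "mat_spectral_radius A =
     Max (norm ` {z::complex. det ((\<chi> i j. (if i = j then z else 0) - complex_of_real (A $ i $ j))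
                                  :: complex^'n^'n) = 0})"

definition Dx :: "(real^'l \<Rightarrow> real^'m \<Rightarrow> real^'l) \<Rightarrow> real^'l \<Rightarrow> real^'m \<Rightarrow> real^'l^'l" where
  "Dx f x lam = matrix (frechet_derivative (\<lambda>y. f y lam) (at x))"

definition is_fixed_point :: "(real^'l \<Rightarrow> real^'m \<Rightarrow> real^'l) \<Rightarrow> real^'l \<Rightarrow> real^'m \<Rightarrow> bool" where
  "is_fixed_point f p lam \<longleftrightarrow> f p lam = p"

definition basin :: "(real^'l \<Rightarrow> real^'m \<Rightarrow> real^'l) \<Rightarrow> real^'l \<Rightarrow> real^'m \<Rightarrow> (real^'l) set" where
  "basin f p lam = {x. (\<lambda>n. ((\<lambda>y. f y lam) ^^ n) x) \<longlonglongrightarrow> p}"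

definition parameter_shift :: "(real \<Rightarrow> real^'m) \<Rightarrow> real^'m \<Rightarrow> real^'m \<Rightarrow> bool" where
  "parameter_shift \<Lambda> lm lp \<longleftrightarrow>
     (\<exists>\<Lambda>'. (\<forall>s. (\<Lambda> has_vector_derivative \<Lambda>' s) (at s)) \<and> continuous_on UNIV \<Lambda>' \<and>
            (\<Lambda>' \<longlongrightarrow> 0) at_bot \<and> (\<Lambda>' \<longlongrightarrow> 0) at_top) \<and>
     (\<Lambda> \<longlongrightarrow> lm) at_bot \<and> (\<Lambda> \<longlongrightarrow> lp) at_top"

definition stable_path ::
  "(real^'l \<Rightarrow> real^'m \<Rightarrow> real^'l) \<Rightarrow> (real \<Rightarrow> real^'m) \<Rightarrow> real^'m \<Rightarrow> real^'m
     \<Rightarrow> (real \<Rightarrow> real^'l) \<Rightarrow> real^'l \<Rightarrow> real^'l \<Rightarrow> bool" where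
  "stable_path f \<Lambda> lm lp X Xm Xp \<longleftrightarrow>
     (\<forall>s. is_fixed_point f (X s) (\<Lambda> s)) \<and>
     connected ((\<lambda>s. (s, X s)) ` UNIV) \<and>
     (X \<longlongrightarrow> Xm) at_bot \<and> (X \<longlongrightarrow> Xp) at_top \<and>
     is_fixed_point f Xm lm \<and> is_fixed_point f Xp lp \<and>
     (\<forall>s. mat_spectral_radius (Dx f (X s) (\<Lambda> s)) < 1) \<and>
     mat_spectral_radius (Dx f Xm lm) < 1 \<and>
     mat_spectral_radius (Dx f Xp lp) < 1"

definition forward_inflowing_stable ::
  "(real^'l \<Rightarrow> real^'m \<Rightarrow> real^'l) \<Rightarrow> (real \<Rightarrow> real^'m) \<Rightarrow> real^'m \<Rightarrow> real^'m
     \<Rightarrow> (real \<Rightarrow> real^'l) \<Rightarrow> real^'l \<Rightarrow> real^'l \<Rightarrow> bool" where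
  "forward_inflowing_stable f \<Lambda> lm lp X Xm Xp \<longleftrightarrow>
     stable_path f \<Lambda> lm lp X Xm Xp \<and>
     (\<exists>K :: real \<Rightarrow> (real^'l) set.
        (\<forall>s. compact (K s)) \<and>
        (\<forall>s1 s2. s1 < s2 \<longrightarrow> K s1 \<subseteq> K s2) \<and>
        (\<forall>s. (\<lambda>x. f x (\<Lambda> s)) ` K s \<subseteq> K s) \<and>
        Xm \<in> interior (\<Inter>s. K s) \<and>
        Xp \<in> interior (closure (\<Union>s. K s)) \<and>
        compact (closure (\<Union>s. K s)) \<and>
        closure (\<Union>s. K s) \<subseteq> basin f Xp lp)"

end

theory Submission
  imports Defs "Jordan_Normal_Form.Spectral_Radius"
begin
no_notation Matrix.vec_index (infixl "$" 100)

lemma cvec_eqI: "(\<And>i. x $ i = y $ i) \<Longrightarrow> x = y"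
  by (simp add: Finite_Cartesian_Product.vec_eq_iff)

lemma det_zero_iff_kernel:
  fixes M :: "'a::field^'n^'n"
  shows "Determinants.det M = 0 \<longleftrightarrow> (\<exists>w. w \<noteq> 0 \<and> M *v w = 0)"
proof -
  have "Determinants.det M \<noteq> 0 \<longleftrightarrow> inj ((*v) M)"
    using det_nz_iff_inj_gen[OF matrix_vector_mul_linear_gen[of M]]
    by (simp add: matrix_of_matrix_vector_mul)
  also have "\<dots> \<longleftrightarrow> (\<forall>x. M *v x = 0 \<longrightarrow> x = 0)"
    by (rule vec.linear_inj_iff_eq_0[OF matrix_vector_mul_linear_gen])
  finally show ?thesis by blast
qed

lemma spec_set_eigen:
  fixes A :: "real^'n^'n"
  defines "AC \<equiv> (\<chi> i j. complex_of_real (A $ i $ j)) :: complex^'n^'n"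
  shows "Determinants.det ((\<chi> i j. (if i = j then z else 0) - complex_of_real (A $ i $ j)) :: complex^'n^'n) = 0
     \<longleftrightarrow> (\<exists>w. w \<noteq> 0 \<and> AC *v w = z *s w)"
proof -
  have eq: "((\<chi> i j. (if i = j then z else 0) - complex_of_real (A $ i $ j)) :: complex^'n^'n) *v w
     = z *s w - AC *v w" for w
    by (rule cvec_eqI) (simp add: AC_def matrix_vector_mult_def sum_subtractf left_diff_distrib
        if_distrib[of "\<lambda>x. x * _"] cong: if_cong)
  show ?thesis unfolding det_zero_iff_kernel eq by (auto simp: right_minus_eq)
qed

definition toM :: "(nat \<Rightarrow> 'n) \<Rightarrow> 'a^'n^'n \<Rightarrow> 'a mat" where
  "toM h M = Matrix.mat CARD('n) CARD('n) (\<lambda>(i,j). M $ h i $ h j)"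

definition toV :: "(nat \<Rightarrow> 'n::finite) \<Rightarrow> 'a^'n \<Rightarrow> 'a Matrix.vec" where
  "toV h w = Matrix.vec CARD('n) (\<lambda>i. w $ h i)"

lemma toM_carrier[simp]: "toM h (M::'a^'n::finite^'n) \<in> carrier_mat CARD('n) CARD('n)"
  by (simp add: toM_def)

lemma toV_carrier[simp]: "toV h (w::'a^'n::finite) \<in> carrier_vec CARD('n)"
  by (simp add: toV_def)

context
  fixes h :: "nat \<Rightarrow> 'n::finite"
  assumes h: "bij_betw h {0..<CARD('n)} UNIV"
begin

lemma toM_mult: "toM h (M::'a::comm_semiring_1^'n^'n) *\<^sub>v toV h w = toV h (M *v w)"
proof (rule eq_vecI)
  show "dim_vec (toM h M *\<^sub>v toV h w) = dim_vec (toV h (M *v w))"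
    by (simp add: toM_def toV_def)
  fix i assume "i < dim_vec (toV h (M *v w))"
  then have i: "i < CARD('n)" by (simp add: toV_def)
  have "Matrix.vec_index (toM h M *\<^sub>v toV h w) i = (\<Sum>j = 0..<CARD('n). M $ h i $ h j * w $ h j)"
    using i by (simp add: toM_def toV_def mult_mat_vec_def scalar_prod_def Matrix.row_def)
  also have "\<dots> = (\<Sum>l\<in>UNIV. M $ h i $ l * w $ l)"
    using sum.reindex_bij_betw[OF h, of "\<lambda>l. M $ h i $ l * w $ l"] by simp
  also have "\<dots> = Matrix.vec_index (toV h (M *v w)) i"
    using i by (simp add: toV_def matrix_vector_mult_def)
  finally show "Matrix.vec_index (toM h M *\<^sub>v toV h w) i = Matrix.vec_index (toV h (M *v w)) i" .
qed

lemma toV_inj: assumes "toV h a = toV h b" shows "a = b"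
proof (rule cvec_eqI)
  fix l :: 'n
  obtain j where j: "j < CARD('n)" "l = h j" using h unfolding bij_betw_def by force
  have "Matrix.vec_index (toV h a) j = Matrix.vec_index (toV h b) j" using assms by simp
  then show "a $ l = b $ l" using j by (simp add: toV_def)
qed

lemma toV_surj: assumes "v \<in> carrier_vec CARD('n)" shows "\<exists>w. v = toV h w"
proof -
  define w where "w = (\<chi> l. Matrix.vec_index v (inv_into {0..<CARD('n)} h l))"
  have "v = toV h w"
  proof (rule eq_vecI)
    show "dim_vec v = dim_vec (toV h w)" using assms by (simp add: toV_def)
    fix i assume "i < dim_vec (toV h w)"
    then have i: "i < CARD('n)" by (simp add: toV_def)
    have "inv_into {0..<CARD('n)} h (h i) = i"
      using h i by (simp add: bij_betw_def inv_into_f_f)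
    then show "Matrix.vec_index v i = Matrix.vec_index (toV h w) i"
      using i by (simp add: toV_def w_def)
  qed
  then show ?thesis by blast
qed

lemma toV_zero: "toV h (0::'a::zero^'n) = 0\<^sub>v CARD('n)"
  by (rule eq_vecI) (auto simp: toV_def)

lemma toV_smult: "toV h (z *s w) = z \<cdot>\<^sub>v toV h (w::'a::times^'n)"
  by (rule eq_vecI) (auto simp: toV_def)

lemma eigenvalue_toM:
  "eigenvalue (toM h (M::'a::field^'n^'n)) z \<longleftrightarrow> (\<exists>w. w \<noteq> 0 \<and> M *v w = z *s w)"
proof
  assume "eigenvalue (toM h M) z"
  then obtain v where v: "v \<in> carrier_vec CARD('n)" "v \<noteq> 0\<^sub>v CARD('n)" "toM h M *\<^sub>v v = z \<cdot>\<^sub>v v"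
    unfolding eigenvalue_def eigenvector_def by (auto simp: toM_def)
  obtain w where w: "v = toV h w" using toV_surj[OF v(1)] by blast
  have "w \<noteq> 0" using v(2) w toV_zero by auto
  moreover have "M *v w = z *s w"
    using v(3) unfolding w toM_mult toV_smult[symmetric] by (rule toV_inj)
  ultimately show "\<exists>w. w \<noteq> 0 \<and> M *v w = z *s w" by blast
next
  assume "\<exists>w. w \<noteq> 0 \<and> M *v w = z *s w"
  then obtain w where w: "w \<noteq> 0" "M *v w = z *s w" by blast
  have "toV h w \<noteq> 0\<^sub>v CARD('n)" using w(1) toV_zero toV_inj by metis
  moreover have "toM h M *\<^sub>v toV h w = z \<cdot>\<^sub>v toV h w"
    by (simp add: toM_mult w(2) toV_smult)
  ultimately show "eigenvalue (toM h M) z"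
    unfolding eigenvalue_def eigenvector_def
    by (intro exI[of _ "toV h w"]) (auto simp: toM_def)
qed

lemma toM_pow: "(toM h (M::'a::comm_semiring_1^'n^'n) ^\<^sub>m k) *\<^sub>v toV h w = toV h (((*v) M ^^ k) w)"
proof (induction k arbitrary: w)
  case 0
  have "dim_row (toM h M) = CARD('n)" by (simp add: toM_def)
  then show ?case by simp
next
  case (Suc k)
  have "(toM h M ^\<^sub>m Suc k) *\<^sub>v toV h w = (toM h M ^\<^sub>m k * toM h M) *\<^sub>v toV h w" by simp
  also have "\<dots> = (toM h M ^\<^sub>m k) *\<^sub>v (toM h M *\<^sub>v toV h w)"
    by (rule assoc_mult_mat_vec[OF pow_carrier_mat[OF toM_carrier] toM_carrier toV_carrier])
  also have "\<dots> = toV h (((*v) M ^^ k) (M *v w))" by (simp add: toM_mult Suc.IH)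
  also have "\<dots> = toV h (((*v) M ^^ Suc k) w)" by (simp add: funpow_Suc_right del: funpow.simps)
  finally show ?case .
qed

end

lemma norm_le_sum_comp: "norm (x::'a::real_normed_vector^'n) \<le> (\<Sum>l\<in>UNIV. norm (x $ l))"
  unfolding norm_vec_def by (rule L2_set_le_sum) auto

lemma matrix_contract:
  fixes A :: "real^'n^'n"
  assumes "mat_spectral_radius A < 1"
  shows "\<exists>N>0. \<forall>v. norm (((*v) A ^^ N) v) \<le> norm v / 2"
proof -
  obtain h :: "nat \<Rightarrow> 'n" where h: "bij_betw h {0..<CARD('n)} UNIV"
    using ex_bij_betw_nat_finite[of "UNIV::'n set"] by auto
  define n where "n = CARD('n)"
  have n0: "n > 0" by (simp add: n_def)
  define AC where "AC = ((\<chi> i j. complex_of_real (A $ i $ j)) :: complex^'n^'n)"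
  define S where "S = {z. Determinants.det ((\<chi> i j. (if i = j then z else 0) - complex_of_real (A $ i $ j)) :: complex^'n^'n) = 0}"
  have S_eig: "S = {z. \<exists>w. w \<noteq> 0 \<and> AC *v w = z *s w}"
    unfolding S_def AC_def using spec_set_eigen[where A=A] by auto
  have "S = spectrum (toM h AC)"
    unfolding S_eig spectrum_def using eigenvalue_toM[OF h, of AC] by auto
  then have fin: "finite S" using card_finite_spectrum(1)[OF toM_carrier] by simp
  define \<rho> where "\<rho> = Max (norm ` S)"
  have rho1: "\<rho> < 1" using assms unfolding mat_spectral_radius_def S_def \<rho>_def .
  have Sle: "norm z \<le> \<rho>" if "z \<in> S" for z
    unfolding \<rho>_def using fin that by (auto intro: Max_ge)
  define t where "t = (max \<rho> 0 + 1) / 2"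
  have t0: "t > 0" and t1: "t < 1" and rt: "\<rho> < t" using rho1 by (auto simp: t_def)
  define ACt where "ACt = ((\<chi> i j. complex_of_real (A $ i $ j / t)) :: complex^'n^'n)"
  have ACt_AC: "AC *v w = complex_of_real t *s (ACt *v w)" for w
    by (rule cvec_eqI) (simp add: AC_def ACt_def matrix_vector_mult_def sum_distrib_left mult.assoc[symmetric] t0[THEN less_imp_neq, symmetric])
  have ACt_lin: "ACt *v (a *s w) = a *s (ACt *v w)" for a w
    by (rule cvec_eqI) (simp add: matrix_vector_mult_def sum_distrib_left mult_ac)
  have eigB: "norm z < 1" if "eigenvalue (toM h ACt) z" for z
  proof -
    have "\<exists>w. w \<noteq> 0 \<and> ACt *v w = z *s w" using that by (simp only: eigenvalue_toM[OF h])
    then obtain w where w: "w \<noteq> 0" "ACt *v w = z *s w" by blast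
    have "AC *v w = complex_of_real t *s (z *s w)" by (simp only: ACt_AC w(2))
    also have "\<dots> = (complex_of_real t * z) *s w" by (rule vector_smult_assoc)
    finally have "AC *v w = (complex_of_real t * z) *s w" .
    then have "complex_of_real t * z \<in> S" unfolding S_eig using w(1) by blast
    then have "norm (complex_of_real t * z) \<le> \<rho>" by (rule Sle)
    then have "norm (complex_of_real t * z) < t" using rt by linarith
    then have "t * norm z < t * 1" using t0 by (simp add: norm_mult)
    then show ?thesis using t0 by simp
  qed
  have "spectral_radius (toM h ACt) \<in> norm ` spectrum (toM h ACt)"
    using spectral_radius_mem_max(1)[OF toM_carrier] by simp
  then obtain z where z: "z \<in> spectrum (toM h ACt)" "spectral_radius (toM h ACt) = norm z" by blast
  have "eigenvalue (toM h ACt) z" using z(1) unfolding spectrum_def by simp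
  then have "spectral_radius (toM h ACt) < 1" using eigB z(2) by simp
  from spectral_radius_jnf_norm_bound_less_1_upper_triangular[OF toM_carrier this]
  obtain c where c: "\<And>k. norm_bound (toM h ACt ^\<^sub>m k) c" by blast
  define c' where "c' = max c 0"
  have compB: "norm ((((*v) ACt ^^ k) w) $ l) \<le> n * c' * norm w" for k w l
  proof -
    obtain i where i: "i < n" "l = h i" using h unfolding bij_betw_def n_def by force
    define P where "P = toM h ACt ^\<^sub>m k"
    have P: "P \<in> carrier_mat n n" unfolding P_def n_def by (rule pow_carrier_mat[OF toM_carrier])
    have "(((*v) ACt ^^ k) w) $ l = Matrix.vec_index (toV h (((*v) ACt ^^ k) w)) i"
      using i by (simp add: toV_def n_def)
    also have "\<dots> = Matrix.vec_index (P *\<^sub>v toV h w) i" unfolding P_def toM_pow[OF h] ..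
    also have "\<dots> = (\<Sum>j = 0..<n. P $$ (i, j) * w $ h j)"
      using i P by (simp add: mult_mat_vec_def scalar_prod_def Matrix.row_def toV_def n_def)
    finally have eq: "(((*v) ACt ^^ k) w) $ l = (\<Sum>j = 0..<n. P $$ (i, j) * w $ h j)" .
    have "norm (\<Sum>j = 0..<n. P $$ (i, j) * w $ h j) \<le> (\<Sum>j = 0..<n. norm (P $$ (i, j) * w $ h j))"
      by (rule norm_sum)
    also have "\<dots> \<le> (\<Sum>j = 0..<n. c' * norm w)"
    proof (rule sum_mono)
      fix j assume j: "j \<in> {0..<n}"
      have "norm_bound P c" using c[of k] by (simp add: P_def)
      then have "norm (P $$ (i, j)) \<le> c" using i j P unfolding norm_bound_def by auto
      then have "norm (P $$ (i, j)) \<le> c'" by (simp add: c'_def)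
      moreover have "norm (w $ h j) \<le> norm w" by (rule Finite_Cartesian_Product.norm_nth_le)
      ultimately show "norm (P $$ (i, j) * w $ h j) \<le> c' * norm w"
        by (simp add: norm_mult mult_mono c'_def)
    qed
    also have "\<dots> = n * c' * norm w" by simp
    finally show ?thesis using eq by simp
  qed
  have pow_AC: "((*v) AC ^^ k) w = (complex_of_real t ^ k) *s (((*v) ACt ^^ k) w)" for k w
  proof (induction k arbitrary: w)
    case 0 then show ?case by simp
  next
    case (Suc k)
    have "((*v) AC ^^ Suc k) w = ((*v) AC ^^ k) (AC *v w)" by (simp add: funpow_Suc_right del: funpow.simps)
    also have "\<dots> = (complex_of_real t ^ k) *s (((*v) ACt ^^ k) (complex_of_real t *s (ACt *v w)))"
      by (simp add: Suc.IH ACt_AC)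
    also have "((*v) ACt ^^ k) (complex_of_real t *s (ACt *v w)) = complex_of_real t *s ((*v) ACt ^^ k) (ACt *v w)"
    proof (induction k)
      case 0 then show ?case by simp
    next
      case (Suc k) then show ?case by (simp add: ACt_lin)
    qed
    also have "((*v) ACt ^^ k) (ACt *v w) = ((*v) ACt ^^ Suc k) w" by (simp add: funpow_Suc_right del: funpow.simps)
    finally show ?case by (simp add: vector_smult_assoc)
  qed
  define vC where "vC = (\<lambda>x::real^'n. (\<chi> i. complex_of_real (x $ i)) :: complex^'n)"
  have norm_vC: "norm (vC x) = norm x" for x
    unfolding norm_vec_def vC_def by simp
  have AC_vC: "((*v) AC ^^ k) (vC x) = vC (((*v) A ^^ k) x)" for k x
  proof (induction k arbitrary: x)
    case 0 then show ?case by simp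
  next
    case (Suc k)
    have "AC *v vC x = vC (A *v x)"
      by (rule cvec_eqI) (simp add: AC_def vC_def matrix_vector_mult_def)
    then show ?case using Suc.IH by (simp add: funpow_Suc_right del: funpow.simps)
  qed
  define C where "C = n * (n * c')"
  have C0: "C \<ge> 0" by (simp add: C_def c'_def)
  have bound: "norm (((*v) A ^^ k) v) \<le> t ^ k * C * norm v" for k v
  proof -
    have "norm (((*v) A ^^ k) v) = norm (((*v) AC ^^ k) (vC v))" by (simp add: AC_vC norm_vC)
    also have "\<dots> \<le> (\<Sum>l\<in>UNIV. norm ((((*v) AC ^^ k) (vC v)) $ l))" by (rule norm_le_sum_comp)
    also have "\<dots> \<le> (\<Sum>l\<in>(UNIV::'n set). t ^ k * (n * c' * norm v))"
    proof (rule sum_mono)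
      fix l
      have "norm ((((*v) AC ^^ k) (vC v)) $ l) = t ^ k * norm ((((*v) ACt ^^ k) (vC v)) $ l)"
        using t0 by (simp add: pow_AC norm_mult norm_power)
      also have "\<dots> \<le> t ^ k * (n * c' * norm v)"
        using compB[of k "vC v" l] t0 by (simp add: norm_vC mult_left_mono)
      finally show "norm ((((*v) AC ^^ k) (vC v)) $ l) \<le> t ^ k * (n * c' * norm v)" .
    qed
    also have "\<dots> = t ^ k * C * norm v" by (simp add: C_def n_def)
    finally show ?thesis .
  qed
  obtain N where N: "t ^ N < 1 / (2 * (C + 1))"
    using real_arch_pow_inv[of "1 / (2 * (C + 1))" t] t1 C0 by auto
  have "N > 0" using N C0 by (cases N) (auto simp: field_simps)
  moreover have "norm (((*v) A ^^ N) v) \<le> norm v / 2" for v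
  proof -
    have "t ^ N * C \<le> 1 / (2 * (C + 1)) * C" using N C0 by (intro mult_right_mono) auto
    also have "\<dots> \<le> 1 / 2" using C0 by (simp add: field_simps)
    finally have "t ^ N * C * norm v \<le> 1/2 * norm v" by (intro mult_right_mono) auto
    then show ?thesis using bound[of N v] by simp
  qed
  ultimately show ?thesis by blast
qed


lemma partial_deriv:
  fixes f :: "real^'l \<Rightarrow> real^'m \<Rightarrow> real^'l"
  assumes "\<And>p. ((\<lambda>p. f (fst p) (snd p)) has_derivative blinfun_apply (g' p)) (at p)"
  shows "((\<lambda>y. f y lam) has_derivative (\<lambda>h. g' (y, lam) (h, 0))) (at y)"
proof -
  have d1: "((\<lambda>y. (y, lam)) has_derivative (\<lambda>h. (h, 0))) (at y)"
    by (rule has_derivative_Pair[OF has_derivative_ident has_derivative_const])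
  from has_derivative_compose[OF d1 assms[of "(y, lam)"]] show ?thesis by simp
qed

lemma Dx_eq:
  fixes f :: "real^'l \<Rightarrow> real^'m \<Rightarrow> real^'l"
  assumes "\<And>p. ((\<lambda>p. f (fst p) (snd p)) has_derivative blinfun_apply (g' p)) (at p)"
  shows "Dx f y lam *v h = g' (y, lam) (h, 0)"
proof -
  note d = partial_deriv[OF assms, of lam y]
  have "frechet_derivative (\<lambda>y. f y lam) (at y) = (\<lambda>h. g' (y, lam) (h, 0))"
    using frechet_derivative_at[OF d] by simp
  moreover have "linear (\<lambda>h. g' (y, lam) (h, 0))" using has_derivative_linear[OF d] .
  ultimately show ?thesis unfolding Dx_def by (simp add: matrix_works)
qed

lemma funpow_mv_add: "((*v) (A::real^'n^'n) ^^ k) (u + v) = ((*v) A ^^ k) u + ((*v) A ^^ k) v"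
  by (induction k) (auto simp: matrix_vector_right_distrib)

lemma funpow_mv_diff: "((*v) (A::real^'n^'n) ^^ k) (u - v) = ((*v) A ^^ k) u - ((*v) A ^^ k) v"
  by (induction k) (auto simp: matrix_vector_mult_diff_distrib)

lemma adapted_norm:
  fixes A :: "real^'n^'n"
  assumes "mat_spectral_radius A < 1"
  shows "\<exists>nn M \<theta>. M \<ge> 1 \<and> 0 \<le> \<theta> \<and> \<theta> < 1 \<and> (\<forall>v. norm v \<le> nn v) \<and> (\<forall>v. nn v \<le> M * norm v)
     \<and> (\<forall>u v. nn (u + v) \<le> nn u + nn v) \<and> (\<forall>v. nn (A *v v) \<le> \<theta> * nn v)"
proof -
  obtain N where N: "N > 0" "\<And>v. norm (((*v) A ^^ N) v) \<le> norm v / 2"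
    using matrix_contract[OF assms] by blast
  obtain B where B: "\<And>x. norm (A *v x) \<le> B * norm x"
    using linear_bounded[OF matrix_vector_mul_linear[of A]] by blast
  define B' where "B' = max B 1"
  have B': "norm (A *v x) \<le> B' * norm x" for x
    using B[of x] by (simp add: B'_def) (smt (verit) mult_right_mono norm_ge_zero)
  have powB: "norm (((*v) A ^^ k) x) \<le> B' ^ k * norm x" for k x
  proof (induction k)
    case 0 then show ?case by simp
  next
    case (Suc k)
    have "norm (((*v) A ^^ Suc k) x) = norm (A *v ((*v) A ^^ k) x)" by simp
    also have "\<dots> \<le> B' * norm (((*v) A ^^ k) x)" by (rule B')
    also have "\<dots> \<le> B' * (B' ^ k * norm x)" using Suc.IH by (intro mult_left_mono) (auto simp: B'_def)
    finally show ?case by simp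
  qed
  define nn where "nn v = (\<Sum>k<N. norm (((*v) A ^^ k) v))" for v
  define M where "M = (\<Sum>k<N. B' ^ k)"
  have M1: "M \<ge> 1"
  proof -
    have "B' ^ 0 \<le> M" unfolding M_def using N(1)
      by (intro member_le_sum) (auto simp: B'_def)
    then show ?thesis by simp
  qed
  have ge: "norm v \<le> nn v" for v
  proof -
    have "norm (((*v) A ^^ 0) v) \<le> nn v" unfolding nn_def using N(1)
      by (intro member_le_sum) auto
    then show ?thesis by simp
  qed
  have le: "nn v \<le> M * norm v" for v
    unfolding nn_def M_def sum_distrib_right by (intro sum_mono powB)
  have add: "nn (u + v) \<le> nn u + nn v" for u v
    unfolding nn_def sum.distrib[symmetric] funpow_mv_add by (intro sum_mono norm_triangle_ineq)
  define \<theta> where "\<theta> = 1 - 1 / (2 * M)"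
  have th: "0 \<le> \<theta>" "\<theta> < 1" using M1 by (auto simp: \<theta>_def field_simps)
  have contr: "nn (A *v v) \<le> \<theta> * nn v" for v
  proof -
    have "nn (A *v v) = (\<Sum>k<N. norm (((*v) A ^^ Suc k) v))"
      unfolding nn_def by (simp add: funpow_Suc_right del: funpow.simps)
    also have "\<dots> = (\<Sum>k<Suc N. norm (((*v) A ^^ k) v)) - norm v"
      by (subst sum.lessThan_Suc_shift) simp
    also have "\<dots> = nn v + norm (((*v) A ^^ N) v) - norm v"
      by (simp add: nn_def)
    also have "\<dots> \<le> nn v - norm v / 2" using N(2)[of v] by simp
    also have "\<dots> \<le> nn v - nn v / (2 * M)"
    proof -
      have "nn v / (2 * M) \<le> M * norm v / (2 * M)" using le[of v] M1 by (intro divide_right_mono) auto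
      also have "\<dots> = norm v / 2" using M1 by simp
      finally show ?thesis by simp
    qed
    also have "\<dots> = \<theta> * nn v" by (simp add: \<theta>_def algebra_simps)
    finally show ?thesis .
  qed
  show ?thesis
    by (rule exI[of _ nn], rule exI[of _ M], rule exI[of _ \<theta>]) (use M1 th ge le add contr in auto)
qed


lemma dist_pair_le: "dist (a, b) (c, d) \<le> dist a c + dist b d"
  unfolding dist_Pair_Pair by (rule sqrt_sum_squares_le_sum) auto

lemma linearization:
  fixes f :: "real^'l \<Rightarrow> real^'m \<Rightarrow> real^'l"
  assumes deriv: "\<And>p. ((\<lambda>p. f (fst p) (snd p)) has_derivative blinfun_apply (g' p)) (at p)"
    and cont: "continuous_on UNIV g'" and eta: "\<eta> > 0"
  shows "\<exists>\<delta>>0. \<forall>y lam. norm (y - x0) \<le> \<delta> \<longrightarrow> norm (lam - l0) \<le> \<delta> \<longrightarrow>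
     norm (f y lam - f x0 lam - Dx f x0 l0 *v (y - x0)) \<le> \<eta> * norm (y - x0)"
proof -
  have "isCont g' (x0, l0)" using cont by (simp add: continuous_on_eq_continuous_at)
  then obtain d where d: "d > 0" "\<And>p. dist p (x0, l0) < d \<Longrightarrow> dist (g' p) (g' (x0, l0)) < \<eta>"
    unfolding continuous_at_eps_delta using eta by blast
  define A where "A = Dx f x0 l0"
  have A: "A *v h = g' (x0, l0) (h, 0)" for h unfolding A_def by (rule Dx_eq[OF deriv])
  have "\<forall>y lam. norm (y - x0) \<le> d/3 \<longrightarrow> norm (lam - l0) \<le> d/3 \<longrightarrow>
     norm (f y lam - f x0 lam - A *v (y - x0)) \<le> \<eta> * norm (y - x0)"
  proof (intro allI impI)
    fix y lam assume y: "norm (y - x0) \<le> d/3" and lam: "norm (lam - l0) \<le> d/3"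
    define S where "S = cball x0 (d/3)"
    define \<phi> where "\<phi> z = f z lam - A *v z" for z
    define \<phi>' where "\<phi>' z h = g' (z, lam) (h, 0) - A *v h" for z h
    have der: "(\<phi> has_derivative \<phi>' z) (at z within S)" if "z \<in> S" for z
    proof -
      have "(\<phi> has_derivative \<phi>' z) (at z)"
        unfolding \<phi>_def[abs_def] \<phi>'_def[abs_def]
        by (intro has_derivative_diff partial_deriv[OF deriv]
              bounded_linear_imp_has_derivative matrix_vector_mul_bounded_linear)
      then show ?thesis by (rule has_derivative_at_withinI)
    qed
    have on: "onorm (\<phi>' z) \<le> \<eta>" if "z \<in> S" for z
    proof (rule onorm_le)
      fix h
      have "dist (z, lam) (x0, l0) \<le> dist z x0 + dist lam l0" by (rule dist_pair_le)
      also have "\<dots> < d"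
      proof -
        have "norm (z - x0) \<le> d/3" using that by (simp add: S_def dist_norm norm_minus_commute)
        then show ?thesis using lam d(1) by (simp add: dist_norm)
      qed
      finally have "dist (g' (z, lam)) (g' (x0, l0)) < \<eta>" by (rule d(2))
      then have n: "norm (g' (z, lam) - g' (x0, l0)) \<le> \<eta>" by (simp add: dist_norm)
      have "\<phi>' z h = blinfun_apply (g' (z, lam) - g' (x0, l0)) (h, 0)"
        by (simp add: \<phi>'_def A blinfun.diff_left)
      then have "norm (\<phi>' z h) \<le> norm (g' (z, lam) - g' (x0, l0)) * norm (h, 0::real^'m)"
        using norm_blinfun by metis
      also have "\<dots> \<le> \<eta> * norm h" using n by (simp add: mult_right_mono)
      finally show "norm (\<phi>' z h) \<le> \<eta> * norm h" .
    qed
    have "norm (\<phi> y - \<phi> x0) \<le> \<eta> * norm (y - x0)"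
      by (rule differentiable_bound[OF _ der on]) (use y d(1) in \<open>auto simp: S_def dist_norm norm_minus_commute\<close>)
    moreover have "\<phi> y - \<phi> x0 = f y lam - f x0 lam - A *v (y - x0)"
      by (simp add: \<phi>_def matrix_vector_mult_diff_distrib algebra_simps)
    ultimately show "norm (f y lam - f x0 lam - A *v (y - x0)) \<le> \<eta> * norm (y - x0)" by simp
  qed
  then show ?thesis using d(1) unfolding A_def by (intro exI[of _ "d/3"]) auto
qed


theorem mainTheorem7:
  fixes f :: "real^'l \<Rightarrow> real^'m \<Rightarrow> real^'l"
    and \<Lambda> :: "real \<Rightarrow> real^'m"
    and lm lp :: "real^'m"
    and X :: "real \<Rightarrow> real^'l"
    and Xm Xp :: "real^'l"
  assumes "C1_map (\<lambda>p :: (real^'l) \<times> (real^'m). f (fst p) (snd p))"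
    and "parameter_shift \<Lambda> lm lp"
    and "forward_inflowing_stable f \<Lambda> lm lp X Xm Xp"
  shows "\<forall>r > 0. \<forall>x :: int \<Rightarrow> real^'l.
           (\<forall>n. x (n + 1) = f (x n) (\<Lambda> (r * real_of_int n))) \<and> (x \<longlongrightarrow> Xm) at_bot
           \<longrightarrow> (x \<longlongrightarrow> Xp) at_top"
proof (intro allI impI)
  fix r :: real and x :: "int \<Rightarrow> real^'l"
  assume r: "r > 0"
  assume hx: "(\<forall>n. x (n + 1) = f (x n) (\<Lambda> (r * real_of_int n))) \<and> (x \<longlongrightarrow> Xm) at_bot"
  then have rec: "\<And>n. x (n + 1) = f (x n) (\<Lambda> (r * real_of_int n))" and xlim: "(x \<longlongrightarrow> Xm) at_bot" by auto
  obtain g' where g'_der: "\<And>p. ((\<lambda>p. f (fst p) (snd p)) has_derivative blinfun_apply (g' p)) (at p)"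
    and g'_cont: "continuous_on UNIV g'"
    using assms(1) unfolding C1_map_def by blast
  have Llim: "(\<Lambda> \<longlongrightarrow> lp) at_top" using assms(2) unfolding parameter_shift_def by blast
  have sp: "stable_path f \<Lambda> lm lp X Xm Xp" using assms(3) unfolding forward_inflowing_stable_def by blast
  then have fixp: "f Xp lp = Xp" and sr: "mat_spectral_radius (Dx f Xp lp) < 1"
    unfolding stable_path_def is_fixed_point_def by auto
  obtain K :: "real \<Rightarrow> (real^'l) set" where
    Kmono: "\<And>s1 s2. s1 < s2 \<Longrightarrow> K s1 \<subseteq> K s2" and
    Kinv: "\<And>s. (\<lambda>x. f x (\<Lambda> s)) ` K s \<subseteq> K s" and
    Kint: "Xm \<in> interior (\<Inter>s. K s)" and
    Kcomp: "compact (closure (\<Union>s. K s))" and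
    Kbasin: "closure (\<Union>s. K s) \<subseteq> basin f Xp lp"
    using assms(3) unfolding forward_inflowing_stable_def by blast
  have Fc: "isCont (\<lambda>p. f (fst p) (snd p)) p" for p
    using has_derivative_continuous[OF g'_der] .
  have seqc: "(\<lambda>k. f (a k) (b k)) \<longlonglongrightarrow> f y l" if "a \<longlonglongrightarrow> y" "b \<longlonglongrightarrow> l" for a b y l
    using isCont_tendsto_compose[OF Fc tendsto_Pair[OF that]] by simp
  define A where "A = Dx f Xp lp"
  obtain nn M \<theta> where M1: "M \<ge> 1" and th0: "0 \<le> \<theta>" and th1: "\<theta> < 1"
    and nn_ge: "\<And>v. norm v \<le> nn v" and nn_le: "\<And>v. nn v \<le> M * norm v"
    and nn_add: "\<And>u v. nn (u + v) \<le> nn u + nn v" and nn_A: "\<And>v. nn (A *v v) \<le> \<theta> * nn v"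
    using adapted_norm[OF sr] unfolding A_def by blast
  define \<eta> where "\<eta> = (1 - \<theta>) / (2 * M)"
  have eta: "\<eta> > 0" using M1 th1 by (simp add: \<eta>_def)
  obtain \<delta> where \<delta>0: "\<delta> > 0" and lin: "\<And>y lam. norm (y - Xp) \<le> \<delta> \<Longrightarrow> norm (lam - lp) \<le> \<delta> \<Longrightarrow>
     norm (f y lam - f Xp lam - A *v (y - Xp)) \<le> \<eta> * norm (y - Xp)"
    using linearization[OF g'_der g'_cont eta, of Xp lp] unfolding A_def by blast
  define \<theta>' where "\<theta>' = \<theta> + M * \<eta>"
  have th'0: "0 \<le> \<theta>'" and th'1: "\<theta>' < 1"
    using M1 th0 th1 eta by (auto simp: \<theta>'_def \<eta>_def field_simps)

  obtain e where e: "e > 0" "ball Xm e \<subseteq> (\<Inter>s. K s)" using Kint unfolding mem_interior by blast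
  have "\<forall>\<^sub>F n in at_bot. dist (x n) Xm < e" using tendstoD[OF xlim e(1)] .
  then obtain N0 where N0: "\<And>n. n \<le> N0 \<Longrightarrow> dist (x n) Xm < e"
    unfolding eventually_at_bot_linorder by blast
  have inK: "x (N0 + int k) \<in> K (r * real_of_int (N0 + int k))" for k
  proof (induction k)
    case 0
    have "x N0 \<in> ball Xm e" using N0[of N0] by (simp add: dist_commute)
    then show ?case using e(2) by auto
  next
    case (Suc k)
    have "x (N0 + int (Suc k)) = f (x (N0 + int k)) (\<Lambda> (r * real_of_int (N0 + int k)))"
    proof -
      have e: "N0 + int (Suc k) = (N0 + int k) + 1" by simp
      show ?thesis unfolding e by (rule rec)
    qed
    also have "\<dots> \<in> K (r * real_of_int (N0 + int k))" using Kinv Suc.IH by blast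
    also have "\<dots> \<subseteq> K (r * real_of_int (N0 + int (Suc k)))" using r by (intro Kmono) simp
    finally show ?case .
  qed
  define y where "y k = x (N0 + int k)" for k
  define \<mu> where "\<mu> k = \<Lambda> (r * real_of_int (N0 + int k))" for k
  have y_rec: "y (Suc k) = f (y k) (\<mu> k)" for k
  proof -
    have e: "N0 + int (Suc k) = (N0 + int k) + 1" by simp
    show ?thesis unfolding y_def \<mu>_def e by (rule rec)
  qed
  define Kp where "Kp = closure (\<Union>s. K s)"
  have yK: "y k \<in> Kp" for k
  proof -
    have "x (N0 + int k) \<in> (\<Union>s. K s)" using inK[of k] by blast
    then show ?thesis unfolding y_def Kp_def using closure_subset by blast
  qed
  have "filterlim (\<lambda>k::nat. r * real_of_int (N0 + int k)) at_top sequentially"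
  proof (subst filterlim_at_top, intro allI)
    fix Z :: real
    show "\<forall>\<^sub>F k in sequentially. Z \<le> r * real_of_int (N0 + int k)"
    proof (rule eventually_sequentiallyI[of "nat \<lceil>Z / r - real_of_int N0\<rceil>"])
      fix k assume hk: "nat \<lceil>Z / r - real_of_int N0\<rceil> \<le> k"
      have "\<lceil>Z / r - real_of_int N0\<rceil> \<le> int k" using hk by (simp add: nat_le_iff)
      then have ck: "real_of_int \<lceil>Z / r - real_of_int N0\<rceil> \<le> real_of_int (int k)" by (simp only: of_int_le_iff)
      have ik: "real_of_int (int k) = real k" by (rule of_int_of_nat_eq)
      have "Z / r - real_of_int N0 \<le> real_of_int \<lceil>Z / r - real_of_int N0\<rceil>" by (rule le_of_int_ceiling)
      then have "Z / r - real_of_int N0 \<le> real k" using ck ik by linarith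
      then have "Z / r \<le> real_of_int N0 + real k" by simp
      then have "r * (Z / r) \<le> r * (real_of_int N0 + real k)" using r by (intro mult_left_mono) auto
      then show "Z \<le> r * real_of_int (N0 + int k)" using r by simp
    qed
  qed
  from filterlim_compose[OF Llim this] have mu_lim: "\<mu> \<longlonglongrightarrow> lp" unfolding \<mu>_def .

  have freq: "\<exists>k\<ge>k0. norm (y k - Xp) < \<epsilon>" if eps: "\<epsilon> > 0" for \<epsilon> k0
  proof (rule ccontr)
    assume nex: "\<not> (\<exists>k\<ge>k0. norm (y k - Xp) < \<epsilon>)"
    have far: "\<epsilon> \<le> norm (y k - Xp)" if "k \<ge> k0" for k using nex that by (auto simp: not_less)
    have sc: "seq_compact Kp" using Kcomp compact_imp_seq_compact unfolding Kp_def by blast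
    obtain l \<sigma> where l: "l \<in> Kp" and \<sigma>: "strict_mono \<sigma>" and ylim: "(y \<circ> \<sigma>) \<longlonglongrightarrow> l"
      using seq_compactE[OF sc, of y] yK by blast
    define g where "g = (\<lambda>z. f z lp)"
    have "l \<in> basin f Xp lp" using l Kbasin unfolding Kp_def by blast
    then have gl: "(\<lambda>n. (g ^^ n) l) \<longlonglongrightarrow> Xp" unfolding basin_def g_def by simp
    then obtain j where j: "norm ((g ^^ j) l - Xp) < \<epsilon>"
      using tendstoD[OF gl eps] unfolding eventually_sequentially dist_norm by blast
    have sub: "(\<lambda>m. y (\<sigma> m + i)) \<longlonglongrightarrow> (g ^^ i) l" for i
    proof (induction i)
      case 0 then show ?case using ylim by (simp add: o_def)
    next
      case (Suc i)
      have sm: "strict_mono (\<lambda>m. \<sigma> m + i)" using \<sigma> by (simp add: strict_mono_def)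
      have "(\<mu> \<circ> (\<lambda>m. \<sigma> m + i)) \<longlonglongrightarrow> lp" by (rule LIMSEQ_subseq_LIMSEQ[OF mu_lim sm])
      then have "(\<lambda>m. f (y (\<sigma> m + i)) (\<mu> (\<sigma> m + i))) \<longlonglongrightarrow> f ((g ^^ i) l) lp"
        using seqc[OF Suc.IH] by (simp add: o_def)
      then show ?case by (simp add: y_rec g_def)
    qed
    have "(\<lambda>m. norm (y (\<sigma> m + j) - Xp)) \<longlonglongrightarrow> norm ((g ^^ j) l - Xp)"
      by (intro tendsto_norm tendsto_diff sub tendsto_const)
    from order_tendstoD(2)[OF this j] obtain m0 where m0: "\<And>m. m \<ge> m0 \<Longrightarrow> norm (y (\<sigma> m + j) - Xp) < \<epsilon>"
      unfolding eventually_sequentially by blast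
    define m where "m = max m0 k0"
    have "k0 \<le> \<sigma> m" using seq_suble[OF \<sigma>, of m] by (simp add: m_def)
    then have "\<epsilon> \<le> norm (y (\<sigma> m + j) - Xp)" using far by simp
    moreover have "norm (y (\<sigma> m + j) - Xp) < \<epsilon>" using m0 by (simp add: m_def)
    ultimately show False by simp
  qed

  have step: "nn (y (Suc k) - Xp) \<le> \<theta>' * nn (y k - Xp) + M * norm (f Xp (\<mu> k) - Xp)"
    if hk: "norm (\<mu> k - lp) \<le> \<delta>" "nn (y k - Xp) \<le> \<delta>" for k
  proof -
    define ee where "ee = y k - Xp"
    define a where "a = f (y k) (\<mu> k) - f Xp (\<mu> k) - A *v ee"
    define c where "c = f Xp (\<mu> k) - Xp"
    have dec: "y (Suc k) - Xp = a + A *v ee + c" by (simp add: y_rec a_def c_def)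
    have "norm (y k - Xp) \<le> \<delta>" using nn_ge[of "y k - Xp"] hk(2) by simp
    then have "norm a \<le> \<eta> * norm ee" unfolding a_def ee_def by (rule lin[OF _ hk(1)])
    then have "M * norm a \<le> M * (\<eta> * norm ee)" using M1 by (intro mult_left_mono) auto
    then have "nn a \<le> M * (\<eta> * norm ee)" using nn_le[of a] by linarith
    also have "\<dots> \<le> M * (\<eta> * nn ee)" using nn_ge[of ee] M1 eta by (intro mult_left_mono) auto
    finally have na: "nn a \<le> M * \<eta> * nn ee" by simp
    have "nn (y (Suc k) - Xp) \<le> nn a + nn (A *v ee) + nn c"
      unfolding dec using nn_add[of "a + A *v ee" c] nn_add[of a "A *v ee"] by linarith
    also have "\<dots> \<le> M * \<eta> * nn ee + \<theta> * nn ee + M * norm c"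
      using na nn_A[of ee] nn_le[of c] by linarith
    also have "\<dots> = \<theta>' * nn ee + M * norm c" by (simp add: \<theta>'_def algebra_simps)
    finally show ?thesis unfolding ee_def c_def .
  qed

  have beta: "(\<lambda>k. norm (f Xp (\<mu> k) - Xp)) \<longlonglongrightarrow> 0"
  proof -
    have "(\<lambda>k. f Xp (\<mu> k)) \<longlonglongrightarrow> f Xp lp" by (rule seqc[OF tendsto_const mu_lim])
    then have "(\<lambda>k. norm (f Xp (\<mu> k) - Xp)) \<longlonglongrightarrow> norm (f Xp lp - Xp)"
      by (intro tendsto_norm tendsto_diff tendsto_const)
    then show ?thesis using fixp by simp
  qed

  have ylim: "y \<longlonglongrightarrow> Xp"
  proof (rule tendstoI)
    fix \<epsilon> :: real assume eps: "\<epsilon> > 0"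
    define \<epsilon>1 where "\<epsilon>1 = min (\<epsilon>/2) \<delta>"
    have e1: "\<epsilon>1 > 0" "\<epsilon>1 \<le> \<delta>" "\<epsilon>1 < \<epsilon>" using eps \<delta>0 by (auto simp: \<epsilon>1_def)
    have pos: "(1 - \<theta>') * \<epsilon>1 / M > 0" using th'1 e1 M1 by simp
    have ev1: "\<forall>\<^sub>F k in sequentially. norm (f Xp (\<mu> k) - Xp) < (1 - \<theta>') * \<epsilon>1 / M"
      using order_tendstoD(2)[OF beta pos] .
    have ev2: "\<forall>\<^sub>F k in sequentially. dist (\<mu> k) lp < \<delta>" using tendstoD[OF mu_lim \<delta>0] .
    obtain k0 where k0: "\<And>k. k \<ge> k0 \<Longrightarrow> norm (f Xp (\<mu> k) - Xp) < (1 - \<theta>') * \<epsilon>1 / M \<and> dist (\<mu> k) lp < \<delta>"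
      using eventually_conj[OF ev1 ev2] unfolding eventually_sequentially by blast
    have "\<epsilon>1 / M > 0" using e1 M1 by simp
    from freq[OF this, of k0] obtain k1 where k1: "k1 \<ge> k0" "norm (y k1 - Xp) < \<epsilon>1 / M" by blast
    have inv: "nn (y (k1 + i) - Xp) \<le> \<epsilon>1" for i
    proof (induction i)
      case 0
      have "nn (y k1 - Xp) \<le> M * norm (y k1 - Xp)" by (rule nn_le)
      also have "\<dots> \<le> M * (\<epsilon>1 / M)" using k1(2) M1 by (intro mult_left_mono) auto
      also have "\<dots> = \<epsilon>1" using M1 by simp
      finally show ?case by simp
    next
      case (Suc i)
      have kk: "k1 + i \<ge> k0" using k1(1) by simp
      have h1: "norm (\<mu> (k1 + i) - lp) \<le> \<delta>" using k0[OF kk] by (simp add: dist_norm)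
      have h2: "nn (y (k1 + i) - Xp) \<le> \<delta>" using Suc.IH e1 by simp
      have "nn (y (k1 + Suc i) - Xp) \<le> \<theta>' * nn (y (k1 + i) - Xp) + M * norm (f Xp (\<mu> (k1 + i)) - Xp)"
        using step[OF h1 h2] by simp
      also have "\<dots> \<le> \<theta>' * \<epsilon>1 + M * ((1 - \<theta>') * \<epsilon>1 / M)"
        using Suc.IH th'0 k0[OF kk] M1 by (intro add_mono mult_left_mono) auto
      also have "\<dots> = \<epsilon>1"
      proof -
        have "M * ((1 - \<theta>') * \<epsilon>1 / M) = (1 - \<theta>') * \<epsilon>1" using M1 by simp
        then show ?thesis by (simp add: algebra_simps)
      qed
      finally show ?case .
    qed
    show "\<forall>\<^sub>F k in sequentially. dist (y k) Xp < \<epsilon>"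
      unfolding eventually_sequentially
    proof (intro exI[of _ k1] allI impI)
      fix k assume "k1 \<le> k"
      then obtain i where "k = k1 + i" using le_Suc_ex by blast
      then have "norm (y k - Xp) \<le> \<epsilon>1" using nn_ge[of "y k - Xp"] inv[of i] by simp
      then show "dist (y k) Xp < \<epsilon>" using e1 by (simp add: dist_norm)
    qed
  qed

  show "(x \<longlongrightarrow> Xp) at_top"
  proof (rule tendstoI)
    fix \<epsilon> :: real assume eps: "\<epsilon> > 0"
    obtain K0 where K0: "\<And>k. k \<ge> K0 \<Longrightarrow> dist (y k) Xp < \<epsilon>"
      using tendstoD[OF ylim eps] unfolding eventually_sequentially by blast
    show "\<forall>\<^sub>F n in at_top. dist (x n) Xp < \<epsilon>"
      unfolding eventually_at_top_linorder
    proof (intro exI[of _ "N0 + int K0"] allI impI)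
      fix n assume n: "n \<ge> N0 + int K0"
      have "x n = y (nat (n - N0))" unfolding y_def using n by simp
      moreover have "nat (n - N0) \<ge> K0" using n by linarith
      ultimately show "dist (x n) Xp < \<epsilon>" using K0 by simp
    qed
  qed
qed

end
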